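(* Let $M$ be a representation of a quiver $Q$ with $\operatorname{Ext}^1(M,M)=0$. Then for every arrow $\alpha\colon x\to y$ of $Q$, the linear map $M_\alpha\colon M_x\to M_y$ is injective or surjective.
   Context: $k$ is a field; $Q$ is a locally finite quiver; representations are finite-dimensional over $k$, and $\operatorname{Ext}^1$ is computed in the category of finite-dimensional representations of $Q$. *)

theory Defs
  imports "Jordan_Normal_Form.Matrix"
begin

text \<open>A finite-dimensional representation over a field 'k assigns to each vertex x the space k^(d x)
 (only finitely many d x nonzero, i.e. finite total dimension) and to each arrow a matrix
 of size d(tgt a) x d(src a).\<close>

definition locally_finite_quiver :: "('a \<Rightarrow> 'v) \<Rightarrow> ('a \<Rightarrow> 'v) \<Rightarrow> bool" where
  "locally_finite_quiver src tgt \<longleftrightarrow>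
     (\<forall>x. finite {a. src a = x} \<and> finite {a. tgt a = x})"

definition is_rep :: "('a \<Rightarrow> 'v) \<Rightarrow> ('a \<Rightarrow> 'v) \<Rightarrow> ('v \<Rightarrow> nat) \<Rightarrow> ('a \<Rightarrow> 'k mat) \<Rightarrow> bool" where
  "is_rep src tgt d \<phi> \<longleftrightarrow>
     finite {x. d x \<noteq> 0} \<and> (\<forall>a. \<phi> a \<in> carrier_mat (d (tgt a)) (d (src a)))"

definition is_morph :: "('a \<Rightarrow> 'v) \<Rightarrow> ('a \<Rightarrow> 'v) \<Rightarrow> ('v \<Rightarrow> nat) \<Rightarrow> ('a \<Rightarrow> 'k::semiring_1 mat)
   \<Rightarrow> ('v \<Rightarrow> nat) \<Rightarrow> ('a \<Rightarrow> 'k mat) \<Rightarrow> ('v \<Rightarrow> 'k mat) \<Rightarrow> bool" where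
  "is_morph src tgt d1 \<phi>1 d2 \<phi>2 f \<longleftrightarrow>
     (\<forall>x. f x \<in> carrier_mat (d2 x) (d1 x)) \<and>
     (\<forall>a. \<phi>2 a * f (src a) = f (tgt a) * \<phi>1 a)"

definition lin_inj :: "nat \<Rightarrow> nat \<Rightarrow> 'k::field mat \<Rightarrow> bool" where
  "lin_inj n m A \<longleftrightarrow> (\<forall>v \<in> carrier_vec n. A *\<^sub>v v = 0\<^sub>v m \<longrightarrow> v = 0\<^sub>v n)"

definition lin_surj :: "nat \<Rightarrow> nat \<Rightarrow> 'k::field mat \<Rightarrow> bool" where
  "lin_surj n m A \<longleftrightarrow> (\<forall>w \<in> carrier_vec m. \<exists>v \<in> carrier_vec n. A *\<^sub>v v = w)"

definition short_exact :: "('a \<Rightarrow> 'v) \<Rightarrow> ('a \<Rightarrow> 'v) \<Rightarrow> ('v \<Rightarrow> nat) \<Rightarrow> ('a \<Rightarrow> 'k::field mat)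
   \<Rightarrow> ('v \<Rightarrow> nat) \<Rightarrow> ('a \<Rightarrow> 'k mat) \<Rightarrow> ('v \<Rightarrow> nat) \<Rightarrow> ('a \<Rightarrow> 'k mat)
   \<Rightarrow> ('v \<Rightarrow> 'k mat) \<Rightarrow> ('v \<Rightarrow> 'k mat) \<Rightarrow> bool" where
  "short_exact src tgt dM \<phi>M dE \<phi>E dN \<phi>N f g \<longleftrightarrow>
     is_morph src tgt dM \<phi>M dE \<phi>E f \<and> is_morph src tgt dE \<phi>E dN \<phi>N g \<and>
     (\<forall>x. lin_inj (dM x) (dE x) (f x)) \<and>
     (\<forall>x. lin_surj (dE x) (dN x) (g x)) \<and>
     (\<forall>x. g x * f x = 0\<^sub>m (dN x) (dM x)) \<and>
     (\<forall>x. \<forall>v \<in> carrier_vec (dE x). g x *\<^sub>v v = 0\<^sub>v (dN x) \<longrightarrow>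
            (\<exists>u \<in> carrier_vec (dM x). f x *\<^sub>v u = v))"

text \<open>Ext^1(N,M) = 0 (Yoneda Ext in the category of finite-dimensional representations):
 every short exact sequence 0 \<rightarrow> M \<rightarrow> E \<rightarrow> N \<rightarrow> 0 of finite-dimensional representations splits.\<close>
definition ext1_vanishes :: "('a \<Rightarrow> 'v) \<Rightarrow> ('a \<Rightarrow> 'v) \<Rightarrow> ('v \<Rightarrow> nat) \<Rightarrow> ('a \<Rightarrow> 'k::field mat)
   \<Rightarrow> ('v \<Rightarrow> nat) \<Rightarrow> ('a \<Rightarrow> 'k mat) \<Rightarrow> bool" where
  "ext1_vanishes src tgt dN \<phi>N dM \<phi>M \<longleftrightarrow>
     (\<forall>dE \<phi>E f g. is_rep src tgt dE \<phi>E \<and> short_exact src tgt dM \<phi>M dE \<phi>E dN \<phi>N f g \<longrightarrow>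
        (\<exists>r. is_morph src tgt dE \<phi>E dM \<phi>M r \<and> (\<forall>x. r x * f x = 1\<^sub>m (dM x))))"

end

theory Submission imports Defs begin

lemma sum_delta_mult1: "finite S \<Longrightarrow> (\<Sum>k\<in>S. f k * (if k = c then 1 else (0::'b::semiring_1))) = (if c \<in> S then f c else 0)"
  by (simp add: if_distrib[of "\<lambda>x. f _ * x"] sum.delta' cong: if_cong)

lemma sum_delta_mult2: "finite S \<Longrightarrow> (\<Sum>k\<in>S. (if c = k then 1 else (0::'b::semiring_1)) * f k) = (if c \<in> S then f c else 0)"
proof -
  assume S: "finite S"
  have "(\<Sum>k\<in>S. (if c = k then 1 else (0::'b)) * f k) = (\<Sum>k\<in>S. if c = k then f k else 0)"
    by (rule sum.cong) auto
  then show ?thesis using S by (simp add: sum.delta)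
qed

lemma sum_delta_mult3: "finite S \<Longrightarrow> (\<Sum>k\<in>S. (if k = c then 1 else (0::'b::semiring_1)) * f k) = (if c \<in> S then f c else 0)"
  using sum_delta_mult2[of S c f] by (simp add: eq_commute)

definition incl1 :: "nat \<Rightarrow> 'k::field mat" where "incl1 n = mat (n+n) n (\<lambda>(i,j). if i = j then 1 else 0)"
definition incl2 :: "nat \<Rightarrow> 'k::field mat" where "incl2 n = mat (n+n) n (\<lambda>(i,j). if i = j + n then 1 else 0)"
definition proj1 :: "nat \<Rightarrow> 'k::field mat" where "proj1 n = mat n (n+n) (\<lambda>(i,j). if i = j then 1 else 0)"
definition proj2 :: "nat \<Rightarrow> 'k::field mat" where "proj2 n = mat n (n+n) (\<lambda>(i,j). if j = i + n then 1 else 0)"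

lemma carr[simp]: "incl1 n \<in> carrier_mat (n+n) n" "incl2 n \<in> carrier_mat (n+n) n"
  "proj1 n \<in> carrier_mat n (n+n)" "proj2 n \<in> carrier_mat n (n+n)"
  by (auto simp: incl1_def incl2_def proj1_def proj2_def)

lemma P1: "A \<in> carrier_mat m (n+n) \<Longrightarrow> A * incl1 n = mat m n (\<lambda>(i,j). A$$(i,j))"
  by (rule eq_matI) (auto simp: incl1_def scalar_prod_def sum_delta_mult1)

lemma P2: "A \<in> carrier_mat m (n+n) \<Longrightarrow> A * incl2 n = mat m n (\<lambda>(i,j). A$$(i,j+n))"
  by (rule eq_matI) (auto simp: incl2_def scalar_prod_def sum_delta_mult1)

lemma P3: "B \<in> carrier_mat n k \<Longrightarrow> incl1 n * B = mat (n+n) k (\<lambda>(i,j). if i < n then B$$(i,j) else 0)"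
  by (rule eq_matI) (auto simp: incl1_def scalar_prod_def sum_delta_mult2)

lemma P3': "B \<in> carrier_mat (n+n) k \<Longrightarrow> proj1 n * B = mat n k (\<lambda>(i,j). B$$(i,j))"
  by (rule eq_matI) (auto simp: proj1_def scalar_prod_def sum_delta_mult2)

lemma P4: "B \<in> carrier_mat n k \<Longrightarrow> incl2 n * B = mat (n+n) k (\<lambda>(i,j). if i < n then 0 else B$$(i-n,j))"
proof (rule eq_matI)
  fix i j assume B: "B \<in> carrier_mat n k" and ij: "i < dim_row (mat (n+n) k (\<lambda>(i,j). if i < n then 0 else B$$(i-n,j)))"
     "j < dim_col (mat (n+n) k (\<lambda>(i,j). if i < n then 0 else B$$(i-n,j)))"
  have "(\<Sum>x<n. (if i = x + n then 1 else 0) * B $$ (x, j)) = (\<Sum>x<n. (if i - n = x then 1 else 0) * B $$ (x, j))" if "\<not> i < n"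
    by (rule sum.cong) (use that in auto)
  then show "(incl2 n * B) $$ (i, j) = mat (n+n) k (\<lambda>(i,j). if i < n then 0 else B$$(i-n,j)) $$ (i, j)"
    using B ij by (auto simp: incl2_def scalar_prod_def sum_delta_mult2 atLeast0LessThan)
qed (auto simp: incl2_def)

lemma P5: "C \<in> carrier_mat (n+n) k \<Longrightarrow> proj2 n * C = mat n k (\<lambda>(i,j). C$$(i+n,j))"
  by (rule eq_matI) (auto simp: proj2_def scalar_prod_def sum_delta_mult3)

lemma P6: "B \<in> carrier_mat m n \<Longrightarrow> B * proj2 n = mat m (n+n) (\<lambda>(i,j). if j < n then 0 else B$$(i,j-n))"
proof (rule eq_matI)
  fix i j assume B: "B \<in> carrier_mat m n" and ij: "i < dim_row (mat m (n+n) (\<lambda>(i,j). if j < n then 0 else B$$(i,j-n)))"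
     "j < dim_col (mat m (n+n) (\<lambda>(i,j). if j < n then 0 else B$$(i,j-n)))"
  have "(\<Sum>x<n. B $$ (i, x) * (if j = x + n then 1 else 0)) = (\<Sum>x<n. B $$ (i, x) * (if x = j - n then 1 else 0))" if "\<not> j < n"
    by (rule sum.cong) (use that in auto)
  then show "(B * proj2 n) $$ (i, j) = mat m (n+n) (\<lambda>(i,j). if j < n then 0 else B$$(i,j-n)) $$ (i, j)"
    using B ij by (auto simp: proj2_def scalar_prod_def sum_delta_mult1 atLeast0LessThan)
qed (auto simp: proj2_def)


lemma mv_zero: "A \<in> carrier_mat m n \<Longrightarrow> A *\<^sub>v 0\<^sub>v n = (0\<^sub>v m :: 'k::field vec)"
  by (intro eq_vecI) (auto simp: scalar_prod_def)

lemma proj1_incl1: "proj1 n * incl1 n = (1\<^sub>m n :: 'k::field mat)"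
  by (subst P3'[OF carr(1)]) (rule eq_matI, auto simp: incl1_def)

lemma proj2_incl2: "proj2 n * incl2 n = (1\<^sub>m n :: 'k::field mat)"
  by (subst P5[OF carr(2)]) (rule eq_matI, auto simp: incl2_def)

lemma proj2_incl1: "proj2 n * incl1 n = (0\<^sub>m n n :: 'k::field mat)"
  by (subst P5[OF carr(1)]) (rule eq_matI, auto simp: incl1_def)

lemma decomp: "incl1 n * proj1 n + incl2 n * proj2 n = (1\<^sub>m (n+n) :: 'k::field mat)"
  by (subst P3[OF carr(3)], subst P4[OF carr(4)]) (rule eq_matI, auto simp: proj1_def proj2_def)

lemma incl1_inj: "lin_inj n (n+n) (incl1 n :: 'k::field mat)"
  unfolding lin_inj_def
proof (intro ballI impI)
  fix u :: "'k vec" assume u: "u \<in> carrier_vec n" and z: "incl1 n *\<^sub>v u = 0\<^sub>v (n+n)"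
  have "u = (proj1 n * incl1 n) *\<^sub>v u" using u by (simp add: proj1_incl1)
  also have "\<dots> = proj1 n *\<^sub>v (incl1 n *\<^sub>v u)" by (rule assoc_mult_mat_vec[OF carr(3) carr(1) u])
  also have "\<dots> = 0\<^sub>v n" using z by (simp add: mv_zero[OF carr(3)])
  finally show "u = 0\<^sub>v n" .
qed

lemma proj2_surj: "lin_surj (n+n) n (proj2 n :: 'k::field mat)"
  unfolding lin_surj_def
proof
  fix w :: "'k vec" assume w: "w \<in> carrier_vec n"
  have "proj2 n *\<^sub>v (incl2 n *\<^sub>v w) = (proj2 n * incl2 n) *\<^sub>v w" by (rule assoc_mult_mat_vec[OF carr(4) carr(2) w, symmetric])
  also have "\<dots> = w" using w by (simp add: proj2_incl2)
  finally show "\<exists>v\<in>carrier_vec (n + n). proj2 n *\<^sub>v v = w"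
    by (intro bexI[of _ "incl2 n *\<^sub>v w"]) (use mult_mat_vec_carrier[OF carr(2) w] in auto)
qed

lemma exact_mid: "v \<in> carrier_vec (n+n) \<Longrightarrow> proj2 n *\<^sub>v v = 0\<^sub>v n \<Longrightarrow>
   \<exists>u\<in>carrier_vec n. incl1 n *\<^sub>v u = (v :: 'k::field vec)"
proof -
  assume v: "v \<in> carrier_vec (n+n)" and z: "proj2 n *\<^sub>v v = 0\<^sub>v n"
  have "v = (incl1 n * proj1 n + incl2 n * proj2 n) *\<^sub>v v" using v by (simp add: decomp)
  also have "\<dots> = (incl1 n * proj1 n) *\<^sub>v v + (incl2 n * proj2 n) *\<^sub>v v"
    by (rule add_mult_distrib_mat_vec[OF _ _ v]) (auto intro: mult_carrier_mat carr)
  also have "\<dots> = incl1 n *\<^sub>v (proj1 n *\<^sub>v v) + incl2 n *\<^sub>v (proj2 n *\<^sub>v v)"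
    using assoc_mult_mat_vec[OF carr(1) carr(3) v] assoc_mult_mat_vec[OF carr(2) carr(4) v] by simp
  also have "\<dots> = incl1 n *\<^sub>v (proj1 n *\<^sub>v v)" using v mult_mat_vec_carrier[OF carr(1) mult_mat_vec_carrier[OF carr(3) v]] by (simp add: z mv_zero[OF carr(2)])
  finally show ?thesis by (intro bexI[of _ "proj1 n *\<^sub>v v"]) (use mult_mat_vec_carrier[OF carr(3) v] in auto)
qed


theorem lemma2:
  fixes src tgt :: "'a \<Rightarrow> 'v" and d :: "'v \<Rightarrow> nat" and \<phi> :: "'a \<Rightarrow> 'k::field mat"
  assumes "locally_finite_quiver src tgt"
    and "is_rep src tgt d \<phi>"
    and "ext1_vanishes src tgt d \<phi> d \<phi>"
  shows "\<forall>a. lin_inj (d (src a)) (d (tgt a)) (\<phi> a) \<or> lin_surj (d (src a)) (d (tgt a)) (\<phi> a)"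
proof (rule allI, rule ccontr)
  fix a
  assume H: "\<not> (lin_inj (d (src a)) (d (tgt a)) (\<phi> a) \<or> lin_surj (d (src a)) (d (tgt a)) (\<phi> a))"
  have \<phi>c: "\<And>b. \<phi> b \<in> carrier_mat (d (tgt b)) (d (src b))" using assms(2) by (simp add: is_rep_def)
  have fin: "finite {x. d x \<noteq> 0}" using assms(2) by (simp add: is_rep_def)
  obtain v where v: "v \<in> carrier_vec (d (src a))" "\<phi> a *\<^sub>v v = 0\<^sub>v (d (tgt a))" "v \<noteq> 0\<^sub>v (d (src a))"
    using H unfolding lin_inj_def by blast
  obtain w where w: "w \<in> carrier_vec (d (tgt a))" "\<And>u. u \<in> carrier_vec (d (src a)) \<Longrightarrow> \<phi> a *\<^sub>v u \<noteq> w"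
    using H unfolding lin_surj_def by blast
  obtain i where i: "i < d (src a)" "v $ i \<noteq> 0"
  proof -
    have "\<exists>i < d (src a). v $ i \<noteq> 0"
    proof (rule ccontr)
      assume "\<not> ?thesis"
      then have "v = 0\<^sub>v (d (src a))" using v(1) by (intro eq_vecI) auto
      with v(3) show False by simp
    qed
    then show ?thesis using that by blast
  qed
  define \<eta> where "\<eta> = mat (d (tgt a)) (d (src a)) (\<lambda>(r,c). if c = i then w $ r / v $ i else 0)"
  have \<eta>c: "\<eta> \<in> carrier_mat (d (tgt a)) (d (src a))" by (simp add: \<eta>_def)
  have \<eta>v: "\<eta> *\<^sub>v v = w"
  proof (rule eq_vecI)
    fix r assume r: "r < dim_vec w"
    have "(\<eta> *\<^sub>v v) $ r = (\<Sum>c\<in>{0..<d (src a)}. (if c = i then w $ r / v $ i else 0) * v $ c)"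
      using r w(1) v(1) by (simp add: \<eta>_def scalar_prod_def)
    also have "\<dots> = (\<Sum>c\<in>{0..<d (src a)}. if c = i then w $ r / v $ i * v $ c else 0)"
      by (rule sum.cong) auto
    also have "\<dots> = w $ r" using i by (simp add: sum.delta')
    finally show "(\<eta> *\<^sub>v v) $ r = w $ r" .
  qed (use w(1) \<eta>c in auto)
  define dE where "dE = (\<lambda>x. d x + d x)"
  define \<phi>E where "\<phi>E = (\<lambda>b. four_block_mat (\<phi> b) (if b = a then \<eta> else 0\<^sub>m (d (tgt b)) (d (src b)))
      (0\<^sub>m (d (tgt b)) (d (src b))) (\<phi> b))"
  define f where "f = (\<lambda>x. incl1 (d x) :: 'k mat)"
  define g where "g = (\<lambda>x. proj2 (d x) :: 'k mat)"
  have \<phi>Ec: "\<And>b. \<phi>E b \<in> carrier_mat (dE (tgt b)) (dE (src b))"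
    unfolding \<phi>E_def dE_def by (rule four_block_carrier_mat[OF \<phi>c \<phi>c])
  have rep: "is_rep src tgt dE \<phi>E"
    unfolding is_rep_def using fin \<phi>Ec by (simp add: dE_def)
  have mf: "is_morph src tgt d \<phi> dE \<phi>E f"
    unfolding is_morph_def
  proof (intro conjI allI)
    fix x show "f x \<in> carrier_mat (dE x) (d x)" by (simp add: f_def dE_def)
  next
    fix b
    show "\<phi>E b * f (src b) = f (tgt b) * \<phi> b"
      unfolding f_def
      apply (subst P1[OF \<phi>Ec[of b, unfolded dE_def]])
      apply (subst P3[OF \<phi>c])
      apply (rule eq_matI)
      using \<phi>c[of b] by (auto simp: \<phi>E_def)
  qed
  have mg: "is_morph src tgt dE \<phi>E d \<phi> g"
    unfolding is_morph_def
  proof (intro conjI allI)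
    fix x show "g x \<in> carrier_mat (d x) (dE x)" by (simp add: g_def dE_def)
  next
    fix b
    show "\<phi> b * g (src b) = g (tgt b) * \<phi>E b"
      unfolding g_def
      apply (subst P6[OF \<phi>c])
      apply (subst P5[OF \<phi>Ec[of b, unfolded dE_def]])
      apply (rule eq_matI)
      using \<phi>c[of b] by (auto simp: \<phi>E_def)
  qed
  have se: "short_exact src tgt d \<phi> dE \<phi>E d \<phi> f g"
    unfolding short_exact_def
    using mf mg incl1_inj proj2_surj proj2_incl1 exact_mid
    by (auto simp: f_def g_def dE_def)
  obtain r where r: "is_morph src tgt dE \<phi>E d \<phi> r" "\<And>x. r x * f x = 1\<^sub>m (d x)"
    using assms(3) rep se unfolding ext1_vanishes_def by blast
  have rc: "\<And>x. r x \<in> carrier_mat (d x) (dE x)" and rm: "\<And>b. \<phi> b * r (src b) = r (tgt b) * \<phi>E b"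
    using r(1) unfolding is_morph_def by auto
  let ?s = "src a" and ?t = "tgt a"
  define R2 where "R2 = (\<lambda>x. r x * incl2 (d x))"
  have R2c: "\<And>x. R2 x \<in> carrier_mat (d x) (d x)"
    unfolding R2_def using rc by (auto simp: dE_def intro: mult_carrier_mat carr)
  have blk: "\<phi>E a * incl2 (d ?s) = incl1 (d ?t) * \<eta> + incl2 (d ?t) * \<phi> a"
    apply (subst P2[OF \<phi>Ec[of a, unfolded dE_def]])
    apply (subst P3[OF \<eta>c])
    apply (subst P4[OF \<phi>c])
    apply (rule eq_matI)
    using \<phi>c[of a] \<eta>c by (auto simp: \<phi>E_def)
  have rc': "r ?t \<in> carrier_mat (d ?t) (d ?t + d ?t)" using rc[of ?t] by (simp add: dE_def)
  have rcs: "r ?s \<in> carrier_mat (d ?s) (d ?s + d ?s)" using rc[of ?s] by (simp add: dE_def)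
  have \<phi>Ea: "\<phi>E a \<in> carrier_mat (d ?t + d ?t) (d ?s + d ?s)" using \<phi>Ec[of a] by (simp add: dE_def)
  have key: "\<phi> a * R2 ?s = \<eta> + R2 ?t * \<phi> a"
  proof -
    have "\<phi> a * R2 ?s = (\<phi> a * r ?s) * incl2 (d ?s)"
      unfolding R2_def by (rule assoc_mult_mat[OF \<phi>c rcs carr(2), symmetric])
    also have "\<dots> = (r ?t * \<phi>E a) * incl2 (d ?s)" by (simp add: rm)
    also have "\<dots> = r ?t * (\<phi>E a * incl2 (d ?s))" by (rule assoc_mult_mat[OF rc' \<phi>Ea carr(2)])
    also have "\<dots> = r ?t * (incl1 (d ?t) * \<eta>) + r ?t * (incl2 (d ?t) * \<phi> a)"
      unfolding blk
      by (rule mult_add_distrib_mat[OF rc']) (auto intro: mult_carrier_mat carr \<eta>c \<phi>c)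
    also have "r ?t * (incl1 (d ?t) * \<eta>) = (r ?t * incl1 (d ?t)) * \<eta>"
      by (rule assoc_mult_mat[OF rc' carr(1) \<eta>c, symmetric])
    also have "\<dots> = \<eta>" using r(2)[of ?t] \<eta>c by (simp add: f_def)
    also have "r ?t * (incl2 (d ?t) * \<phi> a) = R2 ?t * \<phi> a"
      unfolding R2_def by (rule assoc_mult_mat[OF rc' carr(2) \<phi>c, symmetric])
    finally show ?thesis .
  qed
  have "\<phi> a *\<^sub>v (R2 ?s *\<^sub>v v) = (\<phi> a * R2 ?s) *\<^sub>v v"
    by (rule assoc_mult_mat_vec[OF \<phi>c R2c v(1), symmetric])
  also have "\<dots> = \<eta> *\<^sub>v v + (R2 ?t * \<phi> a) *\<^sub>v v"
    unfolding key by (rule add_mult_distrib_mat_vec[OF \<eta>c _ v(1)]) (auto intro: mult_carrier_mat R2c \<phi>c)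
  also have "(R2 ?t * \<phi> a) *\<^sub>v v = R2 ?t *\<^sub>v (\<phi> a *\<^sub>v v)"
    by (rule assoc_mult_mat_vec[OF R2c \<phi>c v(1)])
  also have "\<dots> = 0\<^sub>v (d ?t)" unfolding v(2) by (rule mv_zero[OF R2c])
  finally have "\<phi> a *\<^sub>v (R2 ?s *\<^sub>v v) = w" using \<eta>v w(1) by simp
  moreover have "R2 ?s *\<^sub>v v \<in> carrier_vec (d ?s)" by (rule mult_mat_vec_carrier[OF R2c v(1)])
  ultimately show False using w(2) by blast
qed

end
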